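(* Let $G$ and $H$ be finite vertex-transitive graphs with $\frac{\alpha(G)}{|V(G)|}\geq\frac{\alpha(H)}{|V(H)|}$. Then \[\alpha(G\times H)=\alpha(G)\,|V(H)|,\] and at least one of the following holds: (i) $G\times H$ is MIS-normal; (ii) $\frac{\alpha(G)}{|V(G)|}=\frac{\alpha(H)}{|V(H)|}$ and at least one of $G$, $H$ is IS-imprimitive; (iii) $\frac{\alpha(G)}{|V(G)|}>\frac{\alpha(H)}{|V(H)|}$ and $H$ is disconnected.
   Context: All graphs are finite and simple; $\alpha(G)$ denotes the independence number of $G$. The direct product $G\times H$ has vertex set $V(G)\times V(H)$, with $(u_1,v_1)$ adjacent to $(u_2,v_2)$ if and only if $u_1u_2\in E(G)$ and $v_1v_2\in E(H)$. A maximum independent set is an independent set of size $\alpha$. The product $G\times H$ is called MIS-normal if every maximum independent set of $G\times H$ is the preimage of an independent set of one factor under the corresponding projection, i.e. is of the form $I\times V(H)$ with $I$ independent in $G$, or $V(G)\times J$ with $J$ independent in $H$. For $A\subseteq V(G)$, let $N_G(A)=\{b\in V(G): ab\in E(G)\text{ for some }a\in A\}$ and $N_G[A]=N_G(A)\cup A$. A (nonempty) independent set $A$ of $G$ is called imprimitive if $|A|<\alpha(G)$ and $\frac{|A|}{|N_G[A]|}=\frac{\alpha(G)}{|V(G)|}$. The graph $G$ is IS-imprimitive if it has an imprimitive independent set, and IS-primitive otherwise. *)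

theory Defs
  imports Complex_Main
begin

type_synonym 'a graph = "'a set \<times> ('a \<Rightarrow> 'a \<Rightarrow> bool)"

definition verts :: "'a graph \<Rightarrow> 'a set" where "verts G = fst G"
definition adj :: "'a graph \<Rightarrow> 'a \<Rightarrow> 'a \<Rightarrow> bool" where "adj G = snd G"

definition simple_graph :: "'a graph \<Rightarrow> bool" where
  "simple_graph G \<longleftrightarrow> finite (verts G)
     \<and> (\<forall>u v. adj G u v \<longrightarrow> u \<in> verts G \<and> v \<in> verts G)
     \<and> (\<forall>u v. adj G u v \<longrightarrow> adj G v u)
     \<and> (\<forall>v. \<not> adj G v v)"

definition indep_set :: "'a graph \<Rightarrow> 'a set \<Rightarrow> bool" where
  "indep_set G A \<longleftrightarrow> A \<subseteq> verts G \<and> (\<forall>u\<in>A. \<forall>v\<in>A. \<not> adj G u v)"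

definition indep_num :: "'a graph \<Rightarrow> nat" where
  "indep_num G = Max {card A | A. indep_set G A}"

definition max_indep_set :: "'a graph \<Rightarrow> 'a set \<Rightarrow> bool" where
  "max_indep_set G A \<longleftrightarrow> indep_set G A \<and> card A = indep_num G"

definition graph_aut :: "'a graph \<Rightarrow> ('a \<Rightarrow> 'a) \<Rightarrow> bool" where
  "graph_aut G f \<longleftrightarrow> bij_betw f (verts G) (verts G)
     \<and> (\<forall>u\<in>verts G. \<forall>v\<in>verts G. adj G u v \<longleftrightarrow> adj G (f u) (f v))"

definition vertex_transitive :: "'a graph \<Rightarrow> bool" where
  "vertex_transitive G \<longleftrightarrow>
     (\<forall>u\<in>verts G. \<forall>v\<in>verts G. \<exists>f. graph_aut G f \<and> f u = v)"

definition connected_graph :: "'a graph \<Rightarrow> bool" where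
  "connected_graph G \<longleftrightarrow> verts G \<noteq> {} \<and>
     (\<forall>u\<in>verts G. \<forall>v\<in>verts G. (adj G)\<^sup>*\<^sup>* u v)"

definition direct_prod :: "'a graph \<Rightarrow> 'b graph \<Rightarrow> ('a \<times> 'b) graph" where
  "direct_prod G H = (verts G \<times> verts H,
      \<lambda>(u1, v1) (u2, v2). adj G u1 u2 \<and> adj H v1 v2)"

definition MIS_normal :: "'a graph \<Rightarrow> 'b graph \<Rightarrow> bool" where
  "MIS_normal G H \<longleftrightarrow> (\<forall>S. max_indep_set (direct_prod G H) S \<longrightarrow>
      (\<exists>I. indep_set G I \<and> S = I \<times> verts H) \<or>
      (\<exists>J. indep_set H J \<and> S = verts G \<times> J))"

definition closed_nbhd :: "'a graph \<Rightarrow> 'a set \<Rightarrow> 'a set" where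
  "closed_nbhd G A = {b \<in> verts G. \<exists>a\<in>A. adj G a b} \<union> A"

definition imprimitive_set :: "'a graph \<Rightarrow> 'a set \<Rightarrow> bool" where
  "imprimitive_set G A \<longleftrightarrow> A \<noteq> {} \<and> indep_set G A \<and> card A < indep_num G \<and>
     real (card A) / real (card (closed_nbhd G A))
       = real (indep_num G) / real (card (verts G))"

definition IS_imprimitive :: "'a graph \<Rightarrow> bool" where
  "IS_imprimitive G \<longleftrightarrow> (\<exists>A. imprimitive_set G A)"

end

theory Submission
  imports Defs
begin


lemma indep_finite_set:
  assumes "simple_graph G"
  shows "finite {card A | A. indep_set G A}"
proof -
  have "{card A | A. indep_set G A} \<subseteq> card ` Pow (verts G)"
    by (auto simp: indep_set_def)
  moreover have "finite (verts G)" using assms by (simp add: simple_graph_def)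
  ultimately show ?thesis by (meson finite_Pow_iff finite_imageI finite_subset)
qed

lemma indep_empty: "indep_set G {}" by (simp add: indep_set_def)

lemma indep_card_le:
  assumes "simple_graph G" "indep_set G A"
  shows "card A \<le> indep_num G"
  unfolding indep_num_def using indep_finite_set[OF assms(1)] assms(2)
  by (intro Max_ge) auto

lemma exists_mis:
  assumes "simple_graph G"
  shows "\<exists>I. indep_set G I \<and> card I = indep_num G"
proof -
  have "indep_num G \<in> {card A | A. indep_set G A}"
    unfolding indep_num_def using indep_finite_set[OF assms] indep_empty
    by (intro Max_in) (auto intro: indep_empty)
  then show ?thesis by auto
qed

lemma indep_finite: "simple_graph G \<Longrightarrow> indep_set G A \<Longrightarrow> finite A"
  by (meson indep_set_def simple_graph_def finite_subset)

lemma cn_sub: "A \<subseteq> verts G \<Longrightarrow> closed_nbhd G A \<subseteq> verts G"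
  by (auto simp: closed_nbhd_def)

lemma cn_finite: "simple_graph G \<Longrightarrow> A \<subseteq> verts G \<Longrightarrow> finite (closed_nbhd G A)"
  by (meson cn_sub simple_graph_def finite_subset)

lemma indep_num_pos:
  assumes "simple_graph G" "verts G \<noteq> {}"
  shows "indep_num G > 0"
proof -
  obtain v where v: "v \<in> verts G" using assms(2) by auto
  have "indep_set G {v}" using v assms(1) by (auto simp: indep_set_def simple_graph_def)
  from indep_card_le[OF assms(1) this] show ?thesis by simp
qed



definition autset :: "'a graph \<Rightarrow> ('a \<Rightarrow> 'a) set" where
  "autset G = {f. graph_aut G f \<and> (\<forall>x. x \<notin> verts G \<longrightarrow> f x = x)}"

lemma autset_finite:
  assumes "simple_graph G" shows "finite (autset G)"
proof -
  have fin: "finite (verts G)" using assms by (simp add: simple_graph_def)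
  let ?m = "\<lambda>f. (\<lambda>x. (x, f x)) ` verts G"
  have "?m ` autset G \<subseteq> Pow (verts G \<times> verts G)"
    by (auto simp: autset_def graph_aut_def bij_betw_def)
  hence "finite (?m ` autset G)"
    using fin by (meson finite_Pow_iff finite_SigmaI finite_subset)
  moreover have "inj_on ?m (autset G)"
  proof
    fix f g assume fg: "f \<in> autset G" "g \<in> autset G" "?m f = ?m g"
    show "f = g"
    proof
      fix x show "f x = g x"
      proof (cases "x \<in> verts G")
        case True
        then have "(x, f x) \<in> ?m g" using fg(3) by blast
        then show ?thesis by auto
      next
        case False then show ?thesis using fg by (simp add: autset_def)
      qed
    qed
  qed
  ultimately show ?thesis using finite_imageD by blast
qed

lemma autset_id: "(\<lambda>x. x) \<in> autset G"
  using bij_betw_id unfolding id_def by (simp add: autset_def graph_aut_def)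

lemma autset_comp:
  assumes f: "f \<in> autset G" and g: "g \<in> autset G" shows "f \<circ> g \<in> autset G"
proof -
  have bf: "bij_betw f (verts G) (verts G)" and bg: "bij_betw g (verts G) (verts G)"
    using f g by (auto simp: autset_def graph_aut_def)
  have "bij_betw (f \<circ> g) (verts G) (verts G)" using bij_betw_trans[OF bg bf] .
  moreover have "adj G u v = adj G ((f \<circ> g) u) ((f \<circ> g) v)" if "u \<in> verts G" "v \<in> verts G" for u v
  proof -
    have "g u \<in> verts G" "g v \<in> verts G" using bg that by (auto dest: bij_betwE)
    then show ?thesis using f g that by (simp add: autset_def graph_aut_def)
  qed
  moreover have "(f \<circ> g) x = x" if "x \<notin> verts G" for x
    using f g that by (simp add: autset_def)
  ultimately show ?thesis by (simp add: autset_def graph_aut_def)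
qed

lemma autset_trans:
  assumes "vertex_transitive G" "u \<in> verts G" "v \<in> verts G"
  shows "\<exists>f\<in>autset G. f u = v"
proof -
  obtain f where f: "graph_aut G f" "f u = v" using assms unfolding vertex_transitive_def by blast
  define f' where "f' x = (if x \<in> verts G then f x else x)" for x
  have "graph_aut G f'" using f(1) unfolding graph_aut_def f'_def
    by (auto cong: bij_betw_cong)
  moreover have "f' u = v" using f assms by (simp add: f'_def)
  ultimately show ?thesis by (auto simp: autset_def f'_def)
qed

lemma autset_bij: "f \<in> autset G \<Longrightarrow> bij_betw f (verts G) (verts G)"
  by (simp add: autset_def graph_aut_def)

lemma autset_adj: "f \<in> autset G \<Longrightarrow> u \<in> verts G \<Longrightarrow> v \<in> verts G \<Longrightarrow> adj G (f u) (f v) = adj G u v"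
  by (simp add: autset_def graph_aut_def)

lemma count_le:
  assumes "simple_graph G" "vertex_transitive G"
    "x \<in> verts G" "y \<in> verts G" "x' \<in> verts G" "y' \<in> verts G"
  shows "card {f\<in>autset G. f x = y} \<le> card {f\<in>autset G. f x' = y'}"
proof -
  obtain g where g: "g \<in> autset G" "g y = y'" using autset_trans[OF assms(2,4,6)] by blast
  obtain h where h: "h \<in> autset G" "h x' = x" using autset_trans[OF assms(2,5,3)] by blast
  let ?phi = "\<lambda>f. g \<circ> f \<circ> h"
  have "inj_on ?phi {f\<in>autset G. f x = y}"
  proof
    fix f1 f2 assume f1: "f1 \<in> {f\<in>autset G. f x = y}" and f2: "f2 \<in> {f\<in>autset G. f x = y}"
      and eq: "?phi f1 = ?phi f2"
    show "f1 = f2"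
    proof
      fix z show "f1 z = f2 z"
      proof (cases "z \<in> verts G")
        case True
        then obtain w where w: "w \<in> verts G" "h w = z" using autset_bij[OF h(1)]
          by (metis bij_betw_imp_surj_on imageE)
        have "g (f1 z) = g (f2 z)" using fun_cong[OF eq, of w] w by simp
        moreover have "f1 z \<in> verts G" "f2 z \<in> verts G" using True f1 f2 autset_bij
          by (metis (no_types, lifting) bij_betwE mem_Collect_eq)+
        ultimately show ?thesis using autset_bij[OF g(1)] by (metis bij_betw_def inj_onD)
      next
        case False then show ?thesis using f1 f2 by (simp add: autset_def)
      qed
    qed
  qed
  moreover have "?phi ` {f\<in>autset G. f x = y} \<subseteq> {f\<in>autset G. f x' = y'}"
    using g h by (auto intro!: autset_comp)
  moreover have "finite {f\<in>autset G. f x' = y'}" using autset_finite[OF assms(1)] by simp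
  ultimately show ?thesis by (rule card_inj_on_le)
qed

lemma count_const:
  assumes "simple_graph G" "vertex_transitive G"
    "x \<in> verts G" "y \<in> verts G" "x' \<in> verts G" "y' \<in> verts G"
  shows "card {f\<in>autset G. f x = y} = card {f\<in>autset G. f x' = y'}"
  using count_le[OF assms] count_le[OF assms(1,2,5,6,3,4)] by simp

lemma sum_count:
  assumes "simple_graph G" "I \<subseteq> verts G" "N \<subseteq> verts G"
  shows "(\<Sum>f\<in>autset G. card (f ` I \<inter> N)) = (\<Sum>y\<in>N. \<Sum>x\<in>I. card {f\<in>autset G. f x = y})"
proof -
  have finV: "finite (verts G)" using assms(1) by (simp add: simple_graph_def)
  have fI: "finite I" "finite N" using assms finV finite_subset by auto
  have "card (f ` I \<inter> N) = (\<Sum>x\<in>I. \<Sum>y\<in>N. if f x = y then 1 else 0)" if f: "f \<in> autset G" for f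
  proof -
    have inj: "inj_on f I" using autset_bij[OF f] assms(2) by (meson bij_betw_def inj_on_subset)
    have "f ` I \<inter> N = f ` {x\<in>I. f x \<in> N}" by auto
    hence "card (f ` I \<inter> N) = card {x\<in>I. f x \<in> N}"
      using inj by (simp add: card_image inj_on_subset)
    also have "\<dots> = (\<Sum>x\<in>I. if f x \<in> N then 1 else 0)"
      using fI by (simp add: sum.If_cases Int_def)
    also have "\<dots> = (\<Sum>x\<in>I. \<Sum>y\<in>N. if f x = y then 1 else 0)"
      using fI by (intro sum.cong) (auto simp: sum.delta)
    finally show ?thesis .
  qed
  hence "(\<Sum>f\<in>autset G. card (f ` I \<inter> N)) = (\<Sum>f\<in>autset G. \<Sum>x\<in>I. \<Sum>y\<in>N. if f x = y then 1 else 0)"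
    by (intro sum.cong) auto
  also have "\<dots> = (\<Sum>y\<in>N. \<Sum>x\<in>I. \<Sum>f\<in>autset G. if f x = y then 1 else 0)"
    by (subst sum.swap) (subst sum.swap, subst (2) sum.swap, rule refl)
  also have "\<dots> = (\<Sum>y\<in>N. \<Sum>x\<in>I. card {f\<in>autset G. f x = y})"
    using autset_finite[OF assms(1)] by (simp add: sum.If_cases Int_def)
  finally show ?thesis .
qed



lemma aut_step:
  assumes "simple_graph G" "indep_set G A" "indep_set G I" "card I = indep_num G"
    "f \<in> autset G"
  shows "card A \<le> card (f ` I \<inter> closed_nbhd G A)"
proof -
  let ?N = "closed_nbhd G A"
  have IV: "I \<subseteq> verts G" and AV: "A \<subseteq> verts G" using assms by (auto simp: indep_set_def)
  have bf: "bij_betw f (verts G) (verts G)" using autset_bij[OF assms(5)] .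
  have fIV: "f ` I \<subseteq> verts G" using bf IV by (auto dest: bij_betwE)
  have finI: "finite I" "finite A" using indep_finite assms by blast+
  have cardfI: "card (f ` I) = card I"
    using bf IV by (meson bij_betw_def card_image inj_on_subset)
  let ?T = "(f ` I - ?N) \<union> A"
  have "indep_set G ?T"
    unfolding indep_set_def
  proof (intro conjI ballI)
    show "?T \<subseteq> verts G" using fIV AV by auto
  next
    fix u v assume u: "u \<in> ?T" and v: "v \<in> ?T"
    show "\<not> adj G u v"
    proof
      assume a: "adj G u v"
      have sym: "adj G v u" using a assms(1) by (simp add: simple_graph_def)
      show False
      proof (cases "u \<in> A")
        case uA: True
        show False
        proof (cases "v \<in> A")
          case True then show False using uA a assms(2) by (auto simp: indep_set_def)
        next
          case False
          then have "v \<in> f ` I - ?N" using v by auto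
          moreover have "v \<in> ?N" using uA a fIV calculation unfolding closed_nbhd_def by blast
          ultimately show False by auto
        qed
      next
        case uA: False
        then have uI: "u \<in> f ` I - ?N" using u by auto
        show False
        proof (cases "v \<in> A")
          case True
          then have "u \<in> ?N" using sym fIV uI unfolding closed_nbhd_def by blast
          then show False using uI by auto
        next
          case False
          then have "v \<in> f ` I" using v by auto
          then obtain x y where xy: "x \<in> I" "y \<in> I" "u = f x" "v = f y" using uI by auto
          have "adj G x y" using a xy autset_adj[OF assms(5)] IV by auto
          then show False using xy assms(3) by (auto simp: indep_set_def)
        qed
      qed
    qed
  qed
  then have "card ?T \<le> indep_num G" using indep_card_le assms(1) by blast
  moreover have "card ?T = card (f ` I - ?N) + card A"
    using finI by (subst card_Un_disjoint) (auto simp: closed_nbhd_def)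
  moreover have "card (f ` I) = card (f ` I - ?N) + card (f ` I \<inter> ?N)"
    using finI by (metis Diff_Diff_Int Diff_disjoint Diff_subset Un_Diff_Int card_Un_disjoint
        finite_Diff finite_imageI inf_commute)
  ultimately show ?thesis using cardfI assms(4) by linarith
qed

lemma ratio_lemma:
  assumes G: "simple_graph G" and vt: "vertex_transitive G" and A: "indep_set G A"
  shows "card A * card (verts G) \<le> indep_num G * card (closed_nbhd G A)"
proof (cases "verts G = {}")
  case True
  then have "A = {}" using A by (auto simp: indep_set_def)
  then show ?thesis by simp
next
  case False
  then obtain x0 where x0: "x0 \<in> verts G" by auto
  define c where "c = card {f\<in>autset G. f x0 = x0}"
  have cc: "card {f\<in>autset G. f x = y} = c" if "x \<in> verts G" "y \<in> verts G" for x y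
    using count_const[OF G vt that x0 x0] c_def by simp
  obtain I where I: "indep_set G I" "card I = indep_num G" using exists_mis[OF G] by blast
  have IV: "I \<subseteq> verts G" and AV: "A \<subseteq> verts G" using I A by (auto simp: indep_set_def)
  have NV: "closed_nbhd G A \<subseteq> verts G" using cn_sub[OF AV] .
  have gen: "(\<Sum>f\<in>autset G. card (f ` I \<inter> N)) = card N * card I * c" if "N \<subseteq> verts G" for N
  proof -
    have "(\<Sum>f\<in>autset G. card (f ` I \<inter> N)) = (\<Sum>y\<in>N. \<Sum>x\<in>I. card {f\<in>autset G. f x = y})"
      using sum_count[OF G IV that] .
    also have "\<dots> = (\<Sum>y\<in>N. \<Sum>x\<in>I. c)"
      using that IV cc by (intro sum.cong) auto
    finally show ?thesis by simp
  qed
  have "(\<Sum>f\<in>autset G. card (f ` I \<inter> verts G)) = (\<Sum>f\<in>autset G. card I)"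
  proof (intro sum.cong refl)
    fix f assume f: "f \<in> autset G"
    have bf: "bij_betw f (verts G) (verts G)" using autset_bij[OF f] .
    have "f ` I \<inter> verts G = f ` I" using bf IV by (auto dest: bij_betwE)
    then show "card (f ` I \<inter> verts G) = card I"
      using bf IV by (metis bij_betw_def card_image inj_on_subset)
  qed
  then have s1: "(\<Sum>f\<in>autset G. card (f ` I \<inter> verts G)) = card (autset G) * card I" by simp
  have e1: "card (autset G) * card I = card (verts G) * card I * c"
    using s1 gen[of "verts G", OF order_refl] by linarith
  have Ip: "card I > 0" using I(2) indep_num_pos[OF G False] by simp
  have e2: "card (autset G) * card I = (card (verts G) * c) * card I" using e1 by (simp add: ac_simps)
  have gam: "card (autset G) = card (verts G) * c" using e2 Ip by simp
  have "card (autset G) > 0" using autset_id autset_finite[OF G] by (metis card_gt_0_iff empty_iff)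
  then have cpos: "c > 0" using gam by simp
  have "(\<Sum>f\<in>autset G. card A) \<le> (\<Sum>f\<in>autset G. card (f ` I \<inter> closed_nbhd G A))"
    using aut_step[OF G A I] by (intro sum_mono) auto
  then have "card (autset G) * card A \<le> card (closed_nbhd G A) * card I * c"
    using gen[OF NV] by simp
  then have "c * (card A * card (verts G)) \<le> c * (indep_num G * card (closed_nbhd G A))"
    using gam I(2) by (simp add: algebra_simps)
  then show ?thesis using cpos by simp
qed



lemma prod_adj: "adj (direct_prod G H) (x,v) (y,w) \<longleftrightarrow> adj G x y \<and> adj H v w"
  by (simp add: adj_def direct_prod_def)

lemma prod_verts: "verts (direct_prod G H) = verts G \<times> verts H"
  by (simp add: verts_def direct_prod_def)

lemma prod_indepD:
  assumes "indep_set (direct_prod G H) S" "(x,v) \<in> S" "(y,w) \<in> S" "adj G x y" "adj H v w"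
  shows False
  using assms unfolding indep_set_def by (metis prod_adj)

definition PP :: "'a graph \<Rightarrow> ('a \<times> 'b) set \<Rightarrow> ('a \<times> 'b) set" where
  "PP G S = {(x,v). (x,v) \<in> S \<and> \<not>(\<exists>y. adj G x y \<and> (y,v) \<in> S)}"
definition BB :: "'a graph \<Rightarrow> ('a \<times> 'b) set \<Rightarrow> ('a \<times> 'b) set" where
  "BB G S = S - PP G S"
definition Pv :: "'a graph \<Rightarrow> ('a \<times> 'b) set \<Rightarrow> 'b \<Rightarrow> 'a set" where
  "Pv G S v = {x. (x,v) \<in> PP G S}"
definition Bx :: "'a graph \<Rightarrow> ('a \<times> 'b) set \<Rightarrow> 'a \<Rightarrow> 'b set" where
  "Bx G S x = {v. (x,v) \<in> BB G S}"

lemma sym_adj: "simple_graph G \<Longrightarrow> adj G u v \<Longrightarrow> adj G v u"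
  by (simp add: simple_graph_def)

lemma adj_verts: "simple_graph G \<Longrightarrow> adj G u v \<Longrightarrow> u \<in> verts G \<and> v \<in> verts G"
  by (simp add: simple_graph_def)

lemma fiber_const:
  assumes G: "simple_graph G" and con: "connected_graph G"
    and step: "\<And>x y. adj G x y \<Longrightarrow> F x = F y"
    and x0: "x0 \<in> verts G" and x: "x \<in> verts G"
  shows "F x = F x0"
proof -
  have "(adj G)\<^sup>*\<^sup>* x0 x" using con x0 x by (simp add: connected_graph_def)
  then show ?thesis
    by (induction rule: rtranclp_induct) (auto dest: step)
qed

context
  fixes G :: "'a graph" and H :: "'b graph" and S
  assumes G: "simple_graph G" and H: "simple_graph H"
    and S: "indep_set (direct_prod G H) S"
begin

lemma S_sub: "S \<subseteq> verts G \<times> verts H"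
  using S by (simp add: indep_set_def prod_verts)

lemma Pv_indep: "indep_set G (Pv G S v)"
  unfolding indep_set_def Pv_def PP_def using S_sub by auto

lemma Bx_indep: "indep_set H (Bx G S x)"
  unfolding indep_set_def
proof (intro conjI ballI)
  show "Bx G S x \<subseteq> verts H" using S_sub by (auto simp: Bx_def BB_def)
next
  fix v w assume v: "v \<in> Bx G S x" and w: "w \<in> Bx G S x"
  then obtain y where y: "adj G x y" "(y,v) \<in> S" by (auto simp: Bx_def BB_def PP_def)
  have xw: "(x,w) \<in> S" using w by (auto simp: Bx_def BB_def)
  show "\<not> adj H v w"
  proof
    assume "adj H v w"
    then show False using prod_indepD[OF S y(2) xw sym_adj[OF G y(1)]] by simp
  qed
qed

lemma Pv_sub: "Pv G S v \<subseteq> verts G" using Pv_indep by (simp add: indep_set_def)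
lemma Bx_sub: "Bx G S x \<subseteq> verts H" using Bx_indep by (simp add: indep_set_def)

lemma finG: "finite (verts G)" using G by (simp add: simple_graph_def)
lemma finH: "finite (verts H)" using H by (simp add: simple_graph_def)

lemma card_PP: "card (PP G S) = (\<Sum>v\<in>verts H. card (Pv G S v))"
proof -
  have eq: "PP G S = (\<lambda>(v,x). (x,v)) ` (SIGMA v:verts H. Pv G S v)"
    using S_sub by (auto simp: Pv_def PP_def image_iff)
  have "inj_on (\<lambda>(v,x). (x,v)) (SIGMA v:verts H. Pv G S v)" by (auto simp: inj_on_def)
  then have "card (PP G S) = card (SIGMA v:verts H. Pv G S v)" by (simp add: eq card_image)
  also have "\<dots> = (\<Sum>v\<in>verts H. card (Pv G S v))"
    using finH finG Pv_sub by (intro card_SigmaI) (auto intro: finite_subset)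
  finally show ?thesis .
qed

lemma card_BB: "card (BB G S) = (\<Sum>x\<in>verts G. card (Bx G S x))"
proof -
  have eq: "BB G S = (SIGMA x:verts G. Bx G S x)"
    using S_sub by (auto simp: Bx_def BB_def)
  show ?thesis unfolding eq
    using finH finG Bx_sub by (intro card_SigmaI) (auto intro: finite_subset)
qed

lemma card_S: "card S = (\<Sum>v\<in>verts H. card (Pv G S v)) + (\<Sum>x\<in>verts G. card (Bx G S x))"
proof -
  have fS: "finite S" using S_sub finG finH by (meson finite_SigmaI finite_subset)
  have "S = PP G S \<union> BB G S" "PP G S \<inter> BB G S = {}" by (auto simp: BB_def PP_def)
  then have "card S = card (PP G S) + card (BB G S)"
    using fS by (metis card_Un_disjoint finite_Un)
  then show ?thesis using card_PP card_BB by simp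
qed

definition NG where "NG = {(x,v). v \<in> verts H \<and> x \<in> closed_nbhd G (Pv G S v)}"
definition NH where "NH = (SIGMA x:verts G. closed_nbhd H (Bx G S x))"

lemma card_NG: "card NG = (\<Sum>v\<in>verts H. card (closed_nbhd G (Pv G S v)))"
proof -
  have eq: "NG = (\<lambda>(v,x). (x,v)) ` (SIGMA v:verts H. closed_nbhd G (Pv G S v))"
    by (auto simp: NG_def image_iff)
  have "inj_on (\<lambda>(v,x). (x,v)) (SIGMA v:verts H. closed_nbhd G (Pv G S v))" by (auto simp: inj_on_def)
  then have "card NG = card (SIGMA v:verts H. closed_nbhd G (Pv G S v))" by (simp add: eq card_image)
  also have "\<dots> = (\<Sum>v\<in>verts H. card (closed_nbhd G (Pv G S v)))"
    using finH cn_finite[OF G Pv_sub] by (intro card_SigmaI) auto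
  finally show ?thesis .
qed

lemma card_NH: "card NH = (\<Sum>x\<in>verts G. card (closed_nbhd H (Bx G S x)))"
  unfolding NH_def using finG cn_finite[OF H Bx_sub] by (intro card_SigmaI) auto

lemma NG_NH_disj:
  assumes a1: "x \<in> closed_nbhd G (Pv G S v)" and a2: "v \<in> closed_nbhd H (Bx G S x)"
  shows False
proof -
  have c1: "(x \<in> Pv G S v) \<or> (\<exists>y\<in>Pv G S v. adj G y x)" using a1 by (auto simp: closed_nbhd_def)
  have c2: "(v \<in> Bx G S x) \<or> (\<exists>w\<in>Bx G S x. adj H w v)" using a2 by (auto simp: closed_nbhd_def)
  show False
  proof (cases "x \<in> Pv G S v")
    case xP: True
    then have xvS: "(x,v) \<in> S" and nx: "\<not>(\<exists>y. adj G x y \<and> (y,v) \<in> S)" by (auto simp: Pv_def PP_def)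
    show False
    proof (cases "v \<in> Bx G S x")
      case True then show False using xP by (auto simp: Pv_def Bx_def BB_def)
    next
      case False
      then obtain w where w: "w \<in> Bx G S x" "adj H w v" using c2 by blast
      then obtain y where y: "adj G x y" "(y,w) \<in> S" by (auto simp: Bx_def BB_def PP_def)
      show False using prod_indepD[OF S xvS y(2) y(1) sym_adj[OF H w(2)]] .
    qed
  next
    case False
    then obtain y where y: "y \<in> Pv G S v" "adj G y x" using c1 by blast
    then have yvS: "(y,v) \<in> S" and ny: "\<not>(\<exists>z. adj G y z \<and> (z,v) \<in> S)" by (auto simp: Pv_def PP_def)
    show False
    proof (cases "v \<in> Bx G S x")
      case True
      then have "(x,v) \<in> S" by (auto simp: Bx_def BB_def)
      then show False using ny y(2) by blast
    next
      case False
      then obtain w where w: "w \<in> Bx G S x" "adj H w v" using c2 by blast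
      then have xwS: "(x,w) \<in> S" by (auto simp: Bx_def BB_def)
      show False using prod_indepD[OF S yvS xwS y(2) sym_adj[OF H w(2)]] .
    qed
  qed
qed

lemma NG_NH_disjoint: "NG \<inter> NH = {}"
  unfolding NG_def NH_def using NG_NH_disj by auto

lemma NG_NH_sub: "NG \<union> NH \<subseteq> verts G \<times> verts H"
  unfolding NG_def NH_def using cn_sub[OF Pv_sub] cn_sub[OF Bx_sub] by auto

lemma card_NG_NH: "card NG + card NH \<le> card (verts G) * card (verts H)"
proof -
  have f: "finite (verts G \<times> verts H)" using finG finH by simp
  have "card NG + card NH = card (NG \<union> NH)"
    using NG_NH_disjoint NG_NH_sub f by (metis card_Un_disjoint finite_Un finite_subset)
  also have "\<dots> \<le> card (verts G \<times> verts H)" using NG_NH_sub f by (rule card_mono[rotated])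
  finally show ?thesis by (simp add: card_cartesian_product)
qed

lemma main_bound_gen:
  fixes a n :: nat
  assumes hG: "\<And>A. indep_set G A \<Longrightarrow> card A * n \<le> a * card (closed_nbhd G A)"
    and hH: "\<And>B. indep_set H B \<Longrightarrow> card B * n \<le> a * card (closed_nbhd H B)"
  shows "card S * n = (\<Sum>v\<in>verts H. card (Pv G S v) * n) + (\<Sum>x\<in>verts G. card (Bx G S x) * n)"
    and "(\<Sum>v\<in>verts H. card (Pv G S v) * n) \<le> (\<Sum>v\<in>verts H. a * card (closed_nbhd G (Pv G S v)))"
    and "(\<Sum>x\<in>verts G. card (Bx G S x) * n) \<le> (\<Sum>x\<in>verts G. a * card (closed_nbhd H (Bx G S x)))"
    and "(\<Sum>v\<in>verts H. a * card (closed_nbhd G (Pv G S v))) + (\<Sum>x\<in>verts G. a * card (closed_nbhd H (Bx G S x)))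
           = a * (card NG + card NH)"
proof -
  show "card S * n = (\<Sum>v\<in>verts H. card (Pv G S v) * n) + (\<Sum>x\<in>verts G. card (Bx G S x) * n)"
    using card_S by (simp add: sum_distrib_right distrib_right)
  show "(\<Sum>v\<in>verts H. card (Pv G S v) * n) \<le> (\<Sum>v\<in>verts H. a * card (closed_nbhd G (Pv G S v)))"
    using hG Pv_indep by (intro sum_mono) auto
  show "(\<Sum>x\<in>verts G. card (Bx G S x) * n) \<le> (\<Sum>x\<in>verts G. a * card (closed_nbhd H (Bx G S x)))"
    using hH Bx_indep by (intro sum_mono) auto
  show "(\<Sum>v\<in>verts H. a * card (closed_nbhd G (Pv G S v))) + (\<Sum>x\<in>verts G. a * card (closed_nbhd H (Bx G S x)))
           = a * (card NG + card NH)"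
    using card_NG card_NH by (simp add: sum_distrib_left algebra_simps)
qed

lemma main_bound:
  fixes a :: nat
  assumes hG: "\<And>A. indep_set G A \<Longrightarrow> card A * card (verts G) \<le> a * card (closed_nbhd G A)"
    and hH: "\<And>B. indep_set H B \<Longrightarrow> card B * card (verts G) \<le> a * card (closed_nbhd H B)"
  shows "card S * card (verts G) \<le> a * (card (verts G) * card (verts H))"
proof -
  note M = main_bound_gen[OF hG hH]
  have "card S * card (verts G) \<le> a * (card NG + card NH)" using M by linarith
  also have "\<dots> \<le> a * (card (verts G) * card (verts H))" using card_NG_NH by simp
  finally show ?thesis .
qed

lemma main_eq:
  fixes a :: nat
  assumes hG: "\<And>A. indep_set G A \<Longrightarrow> card A * card (verts G) \<le> a * card (closed_nbhd G A)"
    and hH: "\<And>B. indep_set H B \<Longrightarrow> card B * card (verts G) \<le> a * card (closed_nbhd H B)"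
    and eq: "card S * card (verts G) = a * (card (verts G) * card (verts H))"
    and apos: "a > 0"
  shows "\<And>v. v \<in> verts H \<Longrightarrow> card (Pv G S v) * card (verts G) = a * card (closed_nbhd G (Pv G S v))"
    and "\<And>x. x \<in> verts G \<Longrightarrow> card (Bx G S x) * card (verts G) = a * card (closed_nbhd H (Bx G S x))"
    and "card NG + card NH = card (verts G) * card (verts H)"
proof -
  note M = main_bound_gen[OF hG hH]
  have le: "a * (card NG + card NH) \<le> a * (card (verts G) * card (verts H))" using card_NG_NH by simp
  have e1: "(\<Sum>v\<in>verts H. card (Pv G S v) * card (verts G)) = (\<Sum>v\<in>verts H. a * card (closed_nbhd G (Pv G S v)))"
    using M eq le by linarith
  have e2: "(\<Sum>x\<in>verts G. card (Bx G S x) * card (verts G)) = (\<Sum>x\<in>verts G. a * card (closed_nbhd H (Bx G S x)))"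
    using M eq le by linarith
  show "\<And>v. v \<in> verts H \<Longrightarrow> card (Pv G S v) * card (verts G) = a * card (closed_nbhd G (Pv G S v))"
    using sum_mono_inv[OF e1] hG Pv_indep finH by blast
  show "\<And>x. x \<in> verts G \<Longrightarrow> card (Bx G S x) * card (verts G) = a * card (closed_nbhd H (Bx G S x))"
    using sum_mono_inv[OF e2] hH Bx_indep finG by blast
  have "a * (card NG + card NH) = a * (card (verts G) * card (verts H))" using M eq le by linarith
  then show "card NG + card NH = card (verts G) * card (verts H)" using apos by simp
qed

lemma full_of:
  assumes eqN: "card NG + card NH = card (verts G) * card (verts H)"
  shows "BB G S = {} \<Longrightarrow> v \<in> verts H \<Longrightarrow> closed_nbhd G (Pv G S v) = verts G"
    and "PP G S = {} \<Longrightarrow> x \<in> verts G \<Longrightarrow> closed_nbhd H (Bx G S x) = verts H"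
proof -
  have f: "finite (verts G \<times> verts H)" using finG finH by simp
  have cNG: "card NG \<le> card (verts G \<times> verts H)" "card NH \<le> card (verts G \<times> verts H)"
    using NG_NH_sub f card_mono by (metis le_sup_iff)+
  have NGs: "NG \<subseteq> verts G \<times> verts H" "NH \<subseteq> verts G \<times> verts H" using NG_NH_sub by auto
  { assume BB: "BB G S = {}" and v: "v \<in> verts H"
    have "NH = {}" using BB by (auto simp: NH_def Bx_def closed_nbhd_def)
    then have "card NG = card (verts G \<times> verts H)" using eqN by (simp add: card_cartesian_product)
    then have NGe: "NG = verts G \<times> verts H" using NGs(1) f by (metis card_subset_eq)
    show "closed_nbhd G (Pv G S v) = verts G"
    proof
      show "closed_nbhd G (Pv G S v) \<subseteq> verts G" using cn_sub[OF Pv_sub] .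
      show "verts G \<subseteq> closed_nbhd G (Pv G S v)" using NGe v by (auto simp: NG_def)
    qed }
  { assume PP: "PP G S = {}" and x: "x \<in> verts G"
    have "NG = {}" using PP by (auto simp: NG_def Pv_def closed_nbhd_def)
    then have "card NH = card (verts G \<times> verts H)" using eqN by (simp add: card_cartesian_product)
    then have NHe: "NH = verts G \<times> verts H" using NGs(2) f by (metis card_subset_eq)
    show "closed_nbhd H (Bx G S x) = verts H"
    proof
      show "closed_nbhd H (Bx G S x) \<subseteq> verts H" using cn_sub[OF Bx_sub] .
      show "verts H \<subseteq> closed_nbhd H (Bx G S x)" using NHe x by (auto simp: NH_def)
    qed }
qed

lemma not_both_full:
  assumes "v \<in> verts H" "x \<in> verts G" "closed_nbhd G (Pv G S v) = verts G" "closed_nbhd H (Bx G S x) = verts H"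
  shows False
  using NG_NH_disj[of x v] assms by simp

lemma caseP:
  assumes BB: "BB G S = {}" and cP: "\<And>v. v \<in> verts H \<Longrightarrow> card (Pv G S v) = indep_num G"
    and con: "connected_graph H"
  shows "\<exists>I. indep_set G I \<and> S = I \<times> verts H"
proof -
  have step: "Pv G S v = Pv G S w" if a: "adj H v w" for v w
  proof -
    have vw: "v \<in> verts H" "w \<in> verts H" using adj_verts[OF H a] by auto
    let ?T = "Pv G S v \<union> Pv G S w"
    have "indep_set G ?T"
      unfolding indep_set_def
    proof (intro conjI ballI)
      show "?T \<subseteq> verts G" using Pv_sub by auto
    next
      fix x y assume x: "x \<in> ?T" and y: "y \<in> ?T"
      show "\<not> adj G x y"
      proof
        assume xy: "adj G x y"
        have xS: "x \<in> Pv G S v \<Longrightarrow> (x,v) \<in> S" "x \<in> Pv G S w \<Longrightarrow> (x,w) \<in> S"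
          "y \<in> Pv G S v \<Longrightarrow> (y,v) \<in> S" "y \<in> Pv G S w \<Longrightarrow> (y,w) \<in> S"
          by (auto simp: Pv_def PP_def)
        consider "x \<in> Pv G S v" "y \<in> Pv G S v" | "x \<in> Pv G S w" "y \<in> Pv G S w"
          | "x \<in> Pv G S v" "y \<in> Pv G S w" | "x \<in> Pv G S w" "y \<in> Pv G S v" using x y by blast
        then show False
        proof cases
          case 1 then show False using Pv_indep[of v] xy by (auto simp: indep_set_def)
        next
          case 2 then show False using Pv_indep[of w] xy by (auto simp: indep_set_def)
        next
          case 3 then show False using prod_indepD[OF S xS(1) xS(4) xy a] by auto
        next
          case 4 then show False using prod_indepD[OF S xS(2) xS(3) xy sym_adj[OF H a]] by auto
        qed
      qed
    qed
    then have cT: "card ?T \<le> indep_num G" using indep_card_le[OF G] by blast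
    have fT: "finite ?T" using Pv_sub finG by (meson finite_subset le_sup_iff)
    have "Pv G S v = ?T" using card_subset_eq[OF fT _ ] cP[OF vw(1)] cT
      by (metis Un_upper1 card_mono fT le_antisym)
    moreover have "Pv G S w = ?T" using card_subset_eq[OF fT _ ] cP[OF vw(2)] cT
      by (metis Un_upper2 card_mono fT le_antisym)
    ultimately show ?thesis by simp
  qed
  obtain v0 where v0: "v0 \<in> verts H" using con by (auto simp: connected_graph_def)
  have const: "Pv G S v = Pv G S v0" if "v \<in> verts H" for v
    using fiber_const[OF H con step v0 that] .
  have SP: "S = PP G S" using BB by (auto simp: BB_def PP_def)
  have "S = Pv G S v0 \<times> verts H"
  proof
    show "S \<subseteq> Pv G S v0 \<times> verts H"
    proof
      fix p assume p: "p \<in> S"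
      obtain x v where xv: "p = (x,v)" by force
      have vH: "v \<in> verts H" using S_sub p xv by auto
      have "x \<in> Pv G S v" using SP p xv by (auto simp: Pv_def)
      then show "p \<in> Pv G S v0 \<times> verts H" using const[OF vH] vH xv by simp
    qed
    show "Pv G S v0 \<times> verts H \<subseteq> S"
    proof
      fix p assume p: "p \<in> Pv G S v0 \<times> verts H"
      obtain x v where xv: "p = (x,v)" by force
      have "x \<in> Pv G S v" using const p xv by auto
      then show "p \<in> S" using xv by (auto simp: Pv_def PP_def)
    qed
  qed
  then show ?thesis using Pv_indep by blast
qed

lemma caseB:
  assumes PP: "PP G S = {}" and cB: "\<And>x. x \<in> verts G \<Longrightarrow> card (Bx G S x) = indep_num H"
    and con: "connected_graph G"
  shows "\<exists>J. indep_set H J \<and> S = verts G \<times> J"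
proof -
  have step: "Bx G S x = Bx G S y" if a: "adj G x y" for x y
  proof -
    have xy: "x \<in> verts G" "y \<in> verts G" using adj_verts[OF G a] by auto
    let ?T = "Bx G S x \<union> Bx G S y"
    have "indep_set H ?T"
      unfolding indep_set_def
    proof (intro conjI ballI)
      show "?T \<subseteq> verts H" using Bx_sub by auto
    next
      fix v w assume v: "v \<in> ?T" and w: "w \<in> ?T"
      show "\<not> adj H v w"
      proof
        assume vw: "adj H v w"
        have xS: "v \<in> Bx G S x \<Longrightarrow> (x,v) \<in> S" "v \<in> Bx G S y \<Longrightarrow> (y,v) \<in> S"
          "w \<in> Bx G S x \<Longrightarrow> (x,w) \<in> S" "w \<in> Bx G S y \<Longrightarrow> (y,w) \<in> S"
          by (auto simp: Bx_def BB_def)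
        consider "v \<in> Bx G S x" "w \<in> Bx G S x" | "v \<in> Bx G S y" "w \<in> Bx G S y"
          | "v \<in> Bx G S x" "w \<in> Bx G S y" | "v \<in> Bx G S y" "w \<in> Bx G S x" using v w by blast
        then show False
        proof cases
          case 1 then show False using Bx_indep[of x] vw by (auto simp: indep_set_def)
        next
          case 2 then show False using Bx_indep[of y] vw by (auto simp: indep_set_def)
        next
          case 3 then show False using prod_indepD[OF S xS(1) xS(4) a vw] by auto
        next
          case 4 then show False using prod_indepD[OF S xS(2) xS(3) sym_adj[OF G a] vw] by auto
        qed
      qed
    qed
    then have cT: "card ?T \<le> indep_num H" using indep_card_le[OF H] by blast
    have fT: "finite ?T" using Bx_sub finH by (meson finite_subset le_sup_iff)
    have "Bx G S x = ?T" using cB[OF xy(1)] cT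
      by (metis Un_upper1 card_mono card_subset_eq fT le_antisym)
    moreover have "Bx G S y = ?T" using cB[OF xy(2)] cT
      by (metis Un_upper2 card_mono card_subset_eq fT le_antisym)
    ultimately show ?thesis by simp
  qed
  obtain x0 where x0: "x0 \<in> verts G" using con by (auto simp: connected_graph_def)
  have const: "Bx G S x = Bx G S x0" if "x \<in> verts G" for x
    using fiber_const[OF G con step x0 that] .
  have SB: "S = BB G S" using PP by (auto simp: BB_def)
  have "S = verts G \<times> Bx G S x0"
  proof
    show "S \<subseteq> verts G \<times> Bx G S x0"
    proof
      fix p assume p: "p \<in> S"
      obtain x v where xv: "p = (x,v)" by force
      have xG: "x \<in> verts G" using S_sub p xv by auto
      have "v \<in> Bx G S x" using SB p xv by (auto simp: Bx_def)
      then show "p \<in> verts G \<times> Bx G S x0" using const[OF xG] xG xv by simp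
    qed
    show "verts G \<times> Bx G S x0 \<subseteq> S"
    proof
      fix p assume p: "p \<in> verts G \<times> Bx G S x0"
      obtain x v where xv: "p = (x,v)" by force
      have "v \<in> Bx G S x" using const p xv by auto
      then show "p \<in> S" using xv by (auto simp: Bx_def BB_def)
    qed
  qed
  then show ?thesis using Bx_indep by blast
qed

end


lemma prod_simple:
  assumes G: "simple_graph G" and H: "simple_graph H"
  shows "simple_graph (direct_prod G H)"
  using assms unfolding simple_graph_def
  by (auto simp: prod_verts adj_def direct_prod_def verts_def)

lemma ratio_real_of:
  assumes "c * n = a * d" "d > 0" "n > 0"
  shows "real c / real d = real a / real n"
proof -
  have "real c * real n = real a * real d" using assms(1) by (metis of_nat_mult)
  then show ?thesis using assms(2,3) by (simp add: field_simps)
qed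

lemma disconnected_imprimitive:
  assumes G: "simple_graph G" and vt: "vertex_transitive G" and ne: "verts G \<noteq> {}"
    and nc: "\<not> connected_graph G"
  shows "IS_imprimitive G"
proof -
  obtain u v where uv: "u \<in> verts G" "v \<in> verts G" "\<not> (adj G)\<^sup>*\<^sup>* u v"
    using nc ne by (auto simp: connected_graph_def)
  define K where "K = {w. (adj G)\<^sup>*\<^sup>* u w}"
  obtain I where I: "indep_set G I" "card I = indep_num G" using exists_mis[OF G] by blast
  have finI: "finite I" using indep_finite[OF G I(1)] .
  have IV: "I \<subseteq> verts G" using I by (simp add: indep_set_def)
  define A1 where "A1 = I \<inter> K"
  define A2 where "A2 = I - K"
  have A1i: "indep_set G A1" and A2i: "indep_set G A2"
    using I(1) by (auto simp: A1_def A2_def indep_set_def)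
  have maxI: "\<exists>i\<in>I. adj G w i" if "w \<in> verts G" "w \<notin> I" for w
  proof (rule ccontr)
    assume "\<not> ?thesis"
    then have na: "\<forall>i\<in>I. \<not> adj G w i \<and> \<not> adj G i w" using G by (metis sym_adj)
    have "indep_set G (insert w I)" using I(1) that na G
      by (auto simp: indep_set_def simple_graph_def)
    then have "card (insert w I) \<le> indep_num G" using indep_card_le[OF G] by blast
    then show False using I(2) finI that by simp
  qed
  have A1ne: "A1 \<noteq> {}"
  proof (cases "u \<in> I")
    case True then show ?thesis by (auto simp: A1_def K_def)
  next
    case False
    then obtain i where "i \<in> I" "adj G u i" using maxI uv(1) by blast
    then show ?thesis by (auto simp: A1_def K_def)
  qed
  have A2ne: "A2 \<noteq> {}"
  proof (cases "v \<in> I")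
    case True then show ?thesis using uv(3) by (auto simp: A2_def K_def)
  next
    case False
    then obtain i where i: "i \<in> I" "adj G v i" using maxI uv(2) by blast
    have "i \<notin> K"
    proof
      assume "i \<in> K"
      then have "(adj G)\<^sup>*\<^sup>* u i" by (simp add: K_def)
      moreover have "adj G i v" using sym_adj[OF G i(2)] .
      ultimately have "(adj G)\<^sup>*\<^sup>* u v" by simp
      then show False using uv(3) by simp
    qed
    then show ?thesis using i by (auto simp: A2_def)
  qed
  let ?N1 = "closed_nbhd G A1" and ?N2 = "closed_nbhd G A2"
  have N1K: "?N1 \<subseteq> K"
    by (auto simp: closed_nbhd_def A1_def K_def intro: rtranclp.rtrancl_into_rtrancl)
  have N2K: "?N2 \<inter> K = {}"
  proof -
    { fix b a assume b: "b \<in> K" and a: "a \<in> A2" and ab: "adj G a b"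
      have "(adj G)\<^sup>*\<^sup>* u a" using b sym_adj[OF G ab] by (auto simp: K_def)
      then have False using a by (simp add: A2_def K_def) }
    then show ?thesis by (auto simp: closed_nbhd_def A2_def)
  qed
  have NV: "?N1 \<union> ?N2 \<subseteq> verts G" using cn_sub A1i A2i by (metis indep_set_def le_sup_iff)
  have finV: "finite (verts G)" using G by (simp add: simple_graph_def)
  have "card ?N1 + card ?N2 = card (?N1 \<union> ?N2)"
    using N1K N2K NV finV by (subst card_Un_disjoint) (auto intro: finite_subset)
  also have "\<dots> \<le> card (verts G)" using NV finV card_mono by blast
  finally have Nle: "card ?N1 + card ?N2 \<le> card (verts G)" .
  have r1: "card A1 * card (verts G) \<le> indep_num G * card ?N1" using ratio_lemma[OF G vt A1i] .
  have r2: "card A2 * card (verts G) \<le> indep_num G * card ?N2" using ratio_lemma[OF G vt A2i] .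
  have cI: "card A1 + card A2 = indep_num G"
    using I(2) finI by (metis A1_def A2_def Int_Diff_Un Int_Diff_disjoint card_Un_disjoint finite_Diff finite_Int)
  have "indep_num G * card (verts G) \<le> indep_num G * (card ?N1 + card ?N2)"
    using r1 r2 cI by (metis add_mono distrib_left distrib_right)
  have eq1: "card A1 * card (verts G) = indep_num G * card ?N1"
  proof (rule ccontr)
    assume "card A1 * card (verts G) \<noteq> indep_num G * card ?N1"
    then have "card A1 * card (verts G) < indep_num G * card ?N1" using r1 by simp
    then have "(card A1 + card A2) * card (verts G) < indep_num G * (card ?N1 + card ?N2)"
      using r2 by (simp add: distrib_right distrib_left)
    also have "\<dots> \<le> indep_num G * card (verts G)" using Nle by simp
    finally show False using cI by simp
  qed
  have "card A2 > 0" using A2ne finI by (simp add: A2_def card_gt_0_iff)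
  then have "card A1 < indep_num G" using cI by simp
  moreover have "real (card A1) / real (card ?N1) = real (indep_num G) / real (card (verts G))"
  proof (rule ratio_real_of[OF eq1])
    have "A1 \<subseteq> ?N1" by (auto simp: closed_nbhd_def)
    moreover have "finite ?N1" using cn_finite[OF G] A1i by (simp add: indep_set_def)
    ultimately show "card ?N1 > 0" using A1ne by (metis card_gt_0_iff subset_empty)
    show "card (verts G) > 0" using ne finV by (simp add: card_gt_0_iff)
  qed
  ultimately have "imprimitive_set G A1" using A1ne A1i by (simp add: imprimitive_set_def)
  then show ?thesis by (auto simp: IS_imprimitive_def)
qed



lemma real_ratio_le:
  assumes "n > 0" "m > 0" "real b / real m \<le> real a / real n"
  shows "b * n \<le> a * m"
proof -
  have "real b * real n \<le> real a * real m" using assms by (simp add: field_simps)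
  then show ?thesis by (metis of_nat_le_iff of_nat_mult)
qed

lemma real_ratio_lt:
  assumes "n > 0" "m > 0" "b * n < a * m"
  shows "real b / real m < real a / real n"
proof -
  have "real b * real n < real a * real m" using assms(3) by (metis of_nat_less_iff of_nat_mult)
  then show ?thesis using assms by (simp add: field_simps)
qed

lemma real_ratio_eq:
  assumes "n > 0" "m > 0" "b * n = a * m"
  shows "real a / real n = real b / real m"
  using ratio_real_of[of b n a m] assms by simp

lemma prim_full:
  assumes sK: "simple_graph K" and np: "\<not> IS_imprimitive K" and P: "indep_set K P" and ne: "P \<noteq> {}"
    and eq: "card P * card (verts K) = indep_num K * card (closed_nbhd K P)"
  shows "card P = indep_num K \<and> closed_nbhd K P = verts K"
proof -
  have PV: "P \<subseteq> verts K" using P by (simp add: indep_set_def)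
  have fN: "finite (closed_nbhd K P)" using cn_finite[OF sK PV] .
  have "P \<subseteq> closed_nbhd K P" by (auto simp: closed_nbhd_def)
  then have Npos: "card (closed_nbhd K P) > 0" using ne fN by (metis card_gt_0_iff subset_empty)
  have finV: "finite (verts K)" using sK by (simp add: simple_graph_def)
  have Vpos: "card (verts K) > 0" using PV ne finV by (metis card_gt_0_iff subset_empty)
  have "real (card P) / real (card (closed_nbhd K P)) = real (indep_num K) / real (card (verts K))"
    using ratio_real_of[OF eq Npos Vpos] .
  then have "\<not> card P < indep_num K" using np ne P by (auto simp: IS_imprimitive_def imprimitive_set_def)
  then have cP: "card P = indep_num K" using indep_card_le[OF sK P] by simp
  have "verts K \<noteq> {}" using PV ne by blast
  then have apos: "indep_num K > 0" using indep_num_pos[OF sK] by blast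
  have "card (closed_nbhd K P) = card (verts K)" using eq cP apos by simp
  then have "closed_nbhd K P = verts K" using cn_sub[OF PV] finV by (metis card_subset_eq)
  then show ?thesis using cP by simp
qed

theorem theorem1p8:
  fixes G :: "'a graph" and H :: "'b graph"
  assumes "simple_graph G" and "simple_graph H"
    and "verts G \<noteq> {}" and "verts H \<noteq> {}"
    and "vertex_transitive G" and "vertex_transitive H"
    and ratio: "real (indep_num G) / real (card (verts G))
                  \<ge> real (indep_num H) / real (card (verts H))"
  shows "indep_num (direct_prod G H) = indep_num G * card (verts H)
    \<and> (MIS_normal G H
       \<or> (real (indep_num G) / real (card (verts G))
              = real (indep_num H) / real (card (verts H))
           \<and> (IS_imprimitive G \<or> IS_imprimitive H))
       \<or> (real (indep_num G) / real (card (verts G))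
              > real (indep_num H) / real (card (verts H))
           \<and> \<not> connected_graph H))"
proof -
  note sG = assms(1) and sH = assms(2) and vtG = assms(5) and vtH = assms(6)
  define n where "n = card (verts G)"
  define m where "m = card (verts H)"
  define a where "a = indep_num G"
  define b where "b = indep_num H"
  have npos: "n > 0" using assms(3) sG by (simp add: n_def simple_graph_def card_gt_0_iff)
  have mpos: "m > 0" using assms(4) sH by (simp add: m_def simple_graph_def card_gt_0_iff)
  have apos: "a > 0" using indep_num_pos[OF sG assms(3)] by (simp add: a_def)
  have bn: "b * n \<le> a * m" using real_ratio_le[OF npos mpos] ratio by (simp add: a_def b_def n_def m_def)
  have hG: "\<And>A. indep_set G A \<Longrightarrow> card A * card (verts G) \<le> a * card (closed_nbhd G A)"
    using ratio_lemma[OF sG vtG] by (simp add: a_def)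
  have hH: "\<And>B. indep_set H B \<Longrightarrow> card B * card (verts G) \<le> a * card (closed_nbhd H B)"
  proof -
    fix B assume B: "indep_set H B"
    have r: "card B * m \<le> b * card (closed_nbhd H B)" using ratio_lemma[OF sH vtH B] by (simp add: b_def m_def)
    have "(card B * n) * m = (card B * m) * n" by simp
    also have "\<dots> \<le> (b * card (closed_nbhd H B)) * n" using r by simp
    also have "\<dots> = (b * n) * card (closed_nbhd H B)" by simp
    also have "\<dots> \<le> (a * m) * card (closed_nbhd H B)" using bn by simp
    also have "\<dots> = (a * card (closed_nbhd H B)) * m" by simp
    finally have "(card B * n) * m \<le> (a * card (closed_nbhd H B)) * m" .
    then show "card B * card (verts G) \<le> a * card (closed_nbhd H B)" using mpos by (simp add: n_def)
  qed
  have bound: "card S \<le> a * m" if S: "indep_set (direct_prod G H) S" for S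
  proof -
    have "card S * n \<le> a * (n * m)" using main_bound[OF sG sH S hG hH] by (simp add: n_def m_def)
    then have "card S * n \<le> (a * m) * n" by (simp add: ac_simps)
    then show ?thesis using npos by simp
  qed
  have sP: "simple_graph (direct_prod G H)" using prod_simple[OF sG sH] .
  have part1: "indep_num (direct_prod G H) = a * m"
  proof (rule antisym)
    obtain S0 where S0: "indep_set (direct_prod G H) S0" "card S0 = indep_num (direct_prod G H)"
      using exists_mis[OF sP] by blast
    show "indep_num (direct_prod G H) \<le> a * m" using bound[OF S0(1)] S0(2) by simp
    obtain I where I: "indep_set G I" "card I = a" using exists_mis[OF sG] by (auto simp: a_def)
    have "indep_set (direct_prod G H) (I \<times> verts H)"
      using I(1) by (auto simp: indep_set_def prod_verts prod_adj)
    then have "card (I \<times> verts H) \<le> indep_num (direct_prod G H)" using indep_card_le[OF sP] by blast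
    then show "a * m \<le> indep_num (direct_prod G H)" using I by (simp add: card_cartesian_product m_def)
  qed
  have mis: "card (Pv G S v) * n = a * card (closed_nbhd G (Pv G S v))
             \<and> (BB G S = {} \<longrightarrow> closed_nbhd G (Pv G S v) = verts G)"
    if S: "max_indep_set (direct_prod G H) S" and v: "v \<in> verts H" for S v
  proof -
    have Si: "indep_set (direct_prod G H) S" and cS: "card S = a * m"
      using S part1 by (auto simp: max_indep_set_def)
    have eq: "card S * card (verts G) = a * (card (verts G) * card (verts H))"
      using cS by (simp add: n_def m_def)
    note E = main_eq[OF sG sH Si hG hH eq apos]
    have e1: "card (Pv G S v) * card (verts G) = a * card (closed_nbhd G (Pv G S v))"
      using E(1) v by blast
    show ?thesis using e1 full_of(1)[OF sG sH Si E(3) _ v] by (simp add: n_def)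
  qed
  have misB: "card (Bx G S x) * n = a * card (closed_nbhd H (Bx G S x))
             \<and> (PP G S = {} \<longrightarrow> closed_nbhd H (Bx G S x) = verts H)"
    if S: "max_indep_set (direct_prod G H) S" and x: "x \<in> verts G" for S x
  proof -
    have Si: "indep_set (direct_prod G H) S" and cS: "card S = a * m"
      using S part1 by (auto simp: max_indep_set_def)
    have eq: "card S * card (verts G) = a * (card (verts G) * card (verts H))"
      using cS by (simp add: n_def m_def)
    note E = main_eq[OF sG sH Si hG hH eq apos]
    have e1: "card (Bx G S x) * card (verts G) = a * card (closed_nbhd H (Bx G S x))"
      using E(2) x by blast
    show ?thesis using e1 full_of(2)[OF sG sH Si E(3) _ x] by (simp add: n_def)
  qed
  have cn_empty: "\<And>K. closed_nbhd K {} = {}" by (simp add: closed_nbhd_def)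
  have normalP: "\<exists>I. indep_set G I \<and> S = I \<times> verts H"
    if S: "max_indep_set (direct_prod G H) S" and BB: "BB G S = {}" and con: "connected_graph H" for S
  proof -
    have Si: "indep_set (direct_prod G H) S" using S by (simp add: max_indep_set_def)
    have "card (Pv G S v) = indep_num G" if v: "v \<in> verts H" for v
    proof -
      have "card (Pv G S v) * n = a * n" using mis[OF S v] BB by (simp add: n_def)
      then show ?thesis using npos by (simp add: a_def)
    qed
    then show ?thesis using caseP[OF sG sH Si BB _ con] by blast
  qed
  show ?thesis
  proof (cases "b * n < a * m")
    case strict: True
    have BBe: "BB G S = {}" if S: "max_indep_set (direct_prod G H) S" for S
    proof -
      have Si: "indep_set (direct_prod G H) S" using S by (simp add: max_indep_set_def)
      have Bxe: "Bx G S x = {}" if x: "x \<in> verts G" for x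
      proof (rule ccontr)
        assume ne: "Bx G S x \<noteq> {}"
        let ?B = "Bx G S x" let ?N = "closed_nbhd H (Bx G S x)"
        have Bi: "indep_set H ?B" using Bx_indep[OF sG sH Si] .
        have fN: "finite ?N" using cn_finite[OF sH] Bi by (simp add: indep_set_def)
        have "?B \<subseteq> ?N" by (auto simp: closed_nbhd_def)
        then have Npos: "card ?N > 0" using ne fN by (metis card_gt_0_iff subset_empty)
        have e: "card ?B * n = a * card ?N" using misB[OF S x] by simp
        have r: "card ?B * m \<le> b * card ?N" using ratio_lemma[OF sH vtH Bi] by (simp add: b_def m_def)
        have "(a * card ?N) * m = (card ?B * m) * n" using e by (metis mult.assoc mult.commute)
        also have "\<dots> \<le> (b * card ?N) * n" using r by simp
        also have "\<dots> = (b * n) * card ?N" by simp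
        also have "\<dots> < (a * m) * card ?N" using strict Npos by simp
        finally show False by (simp add: ac_simps)
      qed
      show ?thesis using Bxe S_sub[OF sG sH Si] by (auto simp: BB_def Bx_def)
    qed
    show ?thesis
    proof (cases "connected_graph H")
      case True
      have "MIS_normal G H" unfolding MIS_normal_def using normalP[OF _ BBe True] by blast
      then show ?thesis using part1 by (simp add: a_def m_def)
    next
      case False
      have "real b / real m < real a / real n" using real_ratio_lt[OF npos mpos strict] .
      then show ?thesis using part1 False by (simp add: a_def m_def b_def n_def)
    qed
  next
    case False
    then have eqr: "b * n = a * m" using bn by simp
    have req: "real a / real n = real b / real m" using real_ratio_eq[OF npos mpos eqr] .
    show ?thesis
    proof (cases "IS_imprimitive G \<or> IS_imprimitive H")
      case True
      then show ?thesis using part1 req by (simp add: a_def m_def b_def n_def)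
    next
      case False
      then have npG: "\<not> IS_imprimitive G" and npH: "\<not> IS_imprimitive H" by auto
      have conG: "connected_graph G" using disconnected_imprimitive[OF sG vtG assms(3)] npG by blast
      have conH: "connected_graph H" using disconnected_imprimitive[OF sH vtH assms(4)] npH by blast
      have "MIS_normal G H" unfolding MIS_normal_def
      proof (intro allI impI)
        fix S assume S: "max_indep_set (direct_prod G H) S"
        have Si: "indep_set (direct_prod G H) S" using S by (simp add: max_indep_set_def)
        have Pfull: "closed_nbhd G (Pv G S v) = verts G" if v: "v \<in> verts H" "Pv G S v \<noteq> {}" for v
          using prim_full[OF sG npG Pv_indep[OF sG sH Si] v(2)] mis[OF S v(1)] by (simp add: n_def a_def)
        have Bfull: "card (Bx G S x) = b \<and> closed_nbhd H (Bx G S x) = verts H"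
          if x: "x \<in> verts G" "Bx G S x \<noteq> {}" for x
        proof -
          let ?B = "Bx G S x" let ?N = "closed_nbhd H (Bx G S x)"
          have e: "card ?B * n = a * card ?N" using misB[OF S x(1)] by simp
          have "(card ?B * m) * n = (b * card ?N) * n"
          proof -
            have "(card ?B * m) * n = (card ?B * n) * m" by simp
            also have "\<dots> = card ?N * (a * m)" using e by simp
            also have "\<dots> = card ?N * (b * n)" using eqr by simp
            also have "\<dots> = (b * card ?N) * n" by simp
            finally show ?thesis .
          qed
          then have "card ?B * m = b * card ?N" using npos by (metis mult_cancel2 not_gr0)
          then show ?thesis using prim_full[OF sH npH Bx_indep[OF sG sH Si] x(2)] by (simp add: m_def b_def)
        qed
        have "BB G S = {} \<or> PP G S = {}"
        proof (rule ccontr)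
          assume "\<not> ?thesis"
          then obtain p q where p: "p \<in> BB G S" and q: "q \<in> PP G S" by blast
          obtain x v where xv: "p = (x,v)" by force
          obtain y w where yw: "q = (y,w)" by force
          have sub: "S \<subseteq> verts G \<times> verts H" using S_sub[OF sG sH Si] .
          have x: "x \<in> verts G" and w: "w \<in> verts H"
            using p q xv yw sub by (auto simp: BB_def PP_def)
          have "Bx G S x \<noteq> {}" using p xv by (auto simp: Bx_def)
          then have bf: "closed_nbhd H (Bx G S x) = verts H" using Bfull[OF x] by simp
          have "Pv G S w \<noteq> {}" using q yw by (auto simp: Pv_def)
          then have pf: "closed_nbhd G (Pv G S w) = verts G" using Pfull[OF w] by simp
          show False using not_both_full[OF sG sH Si w x pf bf] .
        qed
        then show "(\<exists>I. indep_set G I \<and> S = I \<times> verts H) \<or> (\<exists>J. indep_set H J \<and> S = verts G \<times> J)"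
        proof
          assume "BB G S = {}"
          then show ?thesis using normalP[OF S _ conH] by blast
        next
          assume PP: "PP G S = {}"
          have "card (Bx G S x) = indep_num H" if x: "x \<in> verts G" for x
          proof -
            have "closed_nbhd H (Bx G S x) = verts H" using misB[OF S x] PP by simp
            then have "Bx G S x \<noteq> {}" using assms(4) cn_empty[of H] by auto
            then show ?thesis using Bfull[OF x] by (simp add: b_def)
          qed
          then show ?thesis using caseB[OF sG sH Si PP _ conG] by blast
        qed
      qed
      then show ?thesis using part1 by (simp add: a_def m_def)
    qed
  qed
qed

end
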